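(* Let $(\Lambda,\Pi,\perp,\mathrm{push})$ be a realizability lattice equipped with a map $\mathrm{app}:\Lambda\times\Lambda\to\Lambda$, $(t,s)\mapsto ts$. The following are equivalent: (1) for all $t,s\in\Lambda$, $\pi\in\Pi$: if $t\perp s\cdot\pi$ then $ts\perp\pi$; (2) $P\ast L\subseteq P\,\clubsuit\,L$ for all $L\subseteq\Lambda$, $P\subseteq\Pi$; (3) $P\ast_\perp L\subseteq P\,\clubsuit\,L$ for all $L\subseteq\Lambda$, $P\subseteq\Pi$; (4) for all $P\subseteq\Pi$, $L\subseteq\Lambda$: if $t\in{}^\perp P$ and $\ell\in L$ then $t\ell$ is orthogonal to every element of $P\ast L$ (and hence to every element of $P\ast_\bullet L\subseteq P\ast L$).
   Context: A realizability lattice consists of sets $\Lambda,\Pi$, a relation $\perp\subseteq\Lambda\times\Pi$ (write $t\perp\pi$) and a map $\mathrm{push}:\Lambda\times\Pi\to\Pi$, written $t\cdot\pi$. Polars: $L^\perp=\{\pi:\forall t\in L,\ t\perp\pi\}$, ${}^\perp P=\{t:\forall\pi\in P,\ t\perp\pi\}$; $\overline P=({}^\perp P)^\perp$. Define $P\ast L=\{\pi\in\Pi: t\cdot\pi\in P\ \forall t\in L\}$, $P\ast_\perp L=\overline{P\ast L}$, $P\ast_\bullet L=\{\pi\in\Pi:t\cdot\pi'\in P\ \forall t\in L,\ \pi'\in\overline{\{\pi\}}\}$, and $P\,\clubsuit\,L=(\{t\ell: t\in{}^\perp P,\ \ell\in L\})^\perp$. *)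

theory Defs
  imports Main
begin

text \<open>A realizability lattice: terms of type 'l (Lambda), stacks of type 'p (Pi),
  orthogonality relation orth, and push :: 'l => 'p => 'p (written t . pi).\<close>

definition lpolar :: "('l \<Rightarrow> 'p \<Rightarrow> bool) \<Rightarrow> 'l set \<Rightarrow> 'p set" where
  "lpolar orth L = {\<pi>. \<forall>t\<in>L. orth t \<pi>}"

definition ppolar :: "('l \<Rightarrow> 'p \<Rightarrow> bool) \<Rightarrow> 'p set \<Rightarrow> 'l set" where
  "ppolar orth P = {t. \<forall>\<pi>\<in>P. orth t \<pi>}"

definition pclosure :: "('l \<Rightarrow> 'p \<Rightarrow> bool) \<Rightarrow> 'p set \<Rightarrow> 'p set" where
  "pclosure orth P = lpolar orth (ppolar orth P)"

definition ast :: "('l \<Rightarrow> 'p \<Rightarrow> 'p) \<Rightarrow> 'p set \<Rightarrow> 'l set \<Rightarrow> 'p set" where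
  "ast push P L = {\<pi>. \<forall>t\<in>L. push t \<pi> \<in> P}"

definition ast_perp :: "('l \<Rightarrow> 'p \<Rightarrow> bool) \<Rightarrow> ('l \<Rightarrow> 'p \<Rightarrow> 'p) \<Rightarrow> 'p set \<Rightarrow> 'l set \<Rightarrow> 'p set" where
  "ast_perp orth push P L = pclosure orth (ast push P L)"

definition ast_bullet :: "('l \<Rightarrow> 'p \<Rightarrow> bool) \<Rightarrow> ('l \<Rightarrow> 'p \<Rightarrow> 'p) \<Rightarrow> 'p set \<Rightarrow> 'l set \<Rightarrow> 'p set" where
  "ast_bullet orth push P L =
     {\<pi>. \<forall>t\<in>L. \<forall>\<pi>'\<in>pclosure orth {\<pi>}. push t \<pi>' \<in> P}"

definition club :: "('l \<Rightarrow> 'p \<Rightarrow> bool) \<Rightarrow> ('l \<Rightarrow> 'l \<Rightarrow> 'l) \<Rightarrow> 'p set \<Rightarrow> 'l set \<Rightarrow> 'p set" where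
  "club orth app P L = lpolar orth {app t l | t l. t \<in> ppolar orth P \<and> l \<in> L}"

end

theory Submission
  imports Defs
begin

theorem mainTheorem4:
  fixes orth :: "'l \<Rightarrow> 'p \<Rightarrow> bool"
    and push :: "'l \<Rightarrow> 'p \<Rightarrow> 'p"
    and app :: "'l \<Rightarrow> 'l \<Rightarrow> 'l"
  defines "C1 \<equiv> (\<forall>t s \<pi>. orth t (push s \<pi>) \<longrightarrow> orth (app t s) \<pi>)"
    and "C2 \<equiv> (\<forall>(L::'l set) (P::'p set). ast push P L \<subseteq> club orth app P L)"
    and "C3 \<equiv> (\<forall>(L::'l set) (P::'p set). ast_perp orth push P L \<subseteq> club orth app P L)"
    and "C4 \<equiv> (\<forall>(P::'p set) (L::'l set) t l. t \<in> ppolar orth P \<and> l \<in> L \<longrightarrow>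
               (\<forall>\<pi>\<in>ast push P L. orth (app t l) \<pi>) \<and>
               (\<forall>\<pi>\<in>ast_bullet orth push P L. orth (app t l) \<pi>))"
  shows "(C1 \<longleftrightarrow> C2) \<and> (C2 \<longleftrightarrow> C3) \<and> (C3 \<longleftrightarrow> C4)"
proof -
  have A: "C1 \<longleftrightarrow> C2"
  proof
    assume c1: C1
    show C2 unfolding C2_def club_def lpolar_def ast_def ppolar_def
      using c1 unfolding C1_def by blast
  next
    assume c2: C2
    show C1 unfolding C1_def
    proof (intro allI impI)
      fix t s \<pi> assume h: "orth t (push s \<pi>)"
      have "\<pi> \<in> ast push {push s \<pi>} {s}" by (simp add: ast_def)
      hence "\<pi> \<in> club orth app {push s \<pi>} {s}" using c2 unfolding C2_def by blast
      moreover have "app t s \<in> {app t l | t l. t \<in> ppolar orth {push s \<pi>} \<and> l \<in> {s}}"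
        using h by (auto simp: ppolar_def)
      ultimately show "orth (app t s) \<pi>" unfolding club_def lpolar_def by blast
    qed
  qed
  have sub: "X \<subseteq> pclosure orth X" for X
    unfolding pclosure_def lpolar_def ppolar_def by blast
  have closed: "X \<subseteq> lpolar orth A \<Longrightarrow> pclosure orth X \<subseteq> lpolar orth A" for X A
    unfolding pclosure_def lpolar_def ppolar_def by blast
  have B: "C2 \<longleftrightarrow> C3"
    unfolding C2_def C3_def ast_perp_def club_def using sub closed by blast
  have bul: "ast_bullet orth push P L \<subseteq> ast push P L" for P L
    unfolding ast_bullet_def ast_def using sub by blast
  have C: "C2 \<longleftrightarrow> C4"
    unfolding C2_def C4_def club_def lpolar_def using bul by blast
  show ?thesis using A B C by blast
qed

end
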